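(* Consider the multicast coalitional game with player set $\mathcal{N}=\{1,\ldots,N\}$, $N\ge 2$, and value function $$v(S)=\sum_{i\in S}U_i-\sum_{i\in S}\frac{\alpha_i}{R_S}-\frac{\beta+\gamma}{R_S},\qquad R_S=\min_{i\in S}R_i,$$ for nonempty $S\subseteq\mathcal{N}$. Let $R_{min}=\min_iR_i$, $R_{max}=\max_iR_i$, $\alpha_{min}=\min_i\alpha_i$, $\alpha_{max}=\max_i\alpha_i$. If $$\frac{R_{max}}{R_{min}}\le\left(\frac{N}{N-1}\right)\left(\frac{\alpha_{min}(N-1)+\beta+\gamma}{\alpha_{max}N+\beta+\gamma}\right),$$ then the core is non-empty.
   Context: A transmitter multicasts a file of size $X>0$ bits to users $\mathcal{N}=\{1,\dots,N\}$. User $i$ has valuation $U_i\in\mathbb{R}$, downloads at rate $R_i>0$, and consumes receive power $P_{Rx,i}>0$; the transmitter transmits at power $P_{Tx}>0$. Costs per unit energy are $a>0$ at users and $b>0$ at the transmitter; bandwidth cost per second is $w>0$. Set $\alpha_i=aP_{Rx,i}X$, $\beta=bP_{Tx}X$, $\gamma=wX$. The core is the set of payoff vectors $(x_1,\dots,x_N)\in\mathbb{R}^N$ with $\sum_{i\in\mathcal{N}}x_i=v(\mathcal{N})$ and $\sum_{i\in S}x_i\ge v(S)$ for every nonempty $S\subseteq\mathcal{N}$. *)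

theory Defs
  imports Complex_Main
begin

definition rate_coalition :: "(nat \<Rightarrow> real) \<Rightarrow> nat set \<Rightarrow> real" where
  "rate_coalition R S = Min (R ` S)"

definition mc_value :: "(nat \<Rightarrow> real) \<Rightarrow> (nat \<Rightarrow> real) \<Rightarrow> (nat \<Rightarrow> real) \<Rightarrow> real \<Rightarrow> real \<Rightarrow> nat set \<Rightarrow> real" where
  "mc_value U R alpha beta gamma S =
     (\<Sum>i\<in>S. U i) - (\<Sum>i\<in>S. alpha i / rate_coalition R S) - (beta + gamma) / rate_coalition R S"

definition core :: "nat set \<Rightarrow> (nat set \<Rightarrow> real) \<Rightarrow> (nat \<Rightarrow> real) set" where
  "core Pl v = {x. (\<Sum>i\<in>Pl. x i) = v Pl \<and>
                   (\<forall>S. S \<subseteq> Pl \<and> S \<noteq> {} \<longrightarrow> (\<Sum>i\<in>S. x i) \<ge> v S)}"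

end

theory Submission
  imports Defs
begin

lemma frac_le_aux:
  fixes x y w z :: real
  assumes "y > 0" "z > 0" "x * z \<le> w * y"
  shows "x / y \<le> w / z"
proof -
  have "x / y = (x * z) / (y * z)" using assms by simp
  also have "\<dots> \<le> (w * y) / (y * z)" using assms by (intro divide_right_mono) auto
  also have "\<dots> = w / z" using assms by simp
  finally show ?thesis .
qed

lemma frac_le_aux2:
  fixes x y w z :: real
  assumes "y > 0" "z > 0" "x / y \<le> w / z"
  shows "x * z \<le> w * y"
proof -
  have "(x / y) * (y * z) \<le> (w / z) * (y * z)" using assms by (intro mult_right_mono) auto
  thus ?thesis using assms by (simp add: mult_ac)
qed

lemma key_ineq:
  fixes N s A RS Rm Rmax amin amax c :: real
  assumes N: "N \<ge> 2" and s1: "s \<ge> 1" and sN: "s \<le> N - 1"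
    and A0: "0 \<le> A" and As: "A \<le> s * amax"
    and Rm: "0 < Rm" and RmRS: "Rm \<le> RS" and RSmax: "RS \<le> Rmax"
    and am: "0 \<le> amin" "amin \<le> amax" and c: "0 < c"
    and cond: "Rmax * ((N - 1) * (N * amax + c)) \<le> Rm * (N * ((N - 1) * amin + c))"
  shows "RS * (N * A + s * c) \<le> Rm * (N * A + N * c)"
proof -
  have "(RS - Rm) * (N * A) \<le> (RS - Rm) * (N * (s * amax))"
    using RmRS As N by (intro mult_left_mono) auto
  hence 1: "RS * (N * A + s * c) - Rm * (N * A + N * c) \<le> s * RS * (N * amax + c) - Rm * N * (s * amax + c)"
    by (simp add: algebra_simps)
  have "RS * ((N - 1) * (N * amax + c)) \<le> Rmax * ((N - 1) * (N * amax + c))"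
    using RSmax N am c by (intro mult_right_mono) auto
  also have "\<dots> \<le> Rm * (N * ((N - 1) * amin + c))" by (rule cond)
  also have "\<dots> \<le> Rm * (N * ((N - 1) * amax + c))"
    using Rm N am by (intro mult_left_mono) (auto intro!: mult_left_mono)
  finally have 2: "RS * ((N - 1) * (N * amax + c)) \<le> Rm * (N * ((N - 1) * amax + c))" .
  have "s * (RS * ((N - 1) * (N * amax + c))) \<le> s * (Rm * (N * ((N - 1) * amax + c)))"
    using 2 s1 by (intro mult_left_mono) auto
  moreover have "Rm * N * (s * ((N - 1) * amax + c)) \<le> Rm * N * ((N - 1) * (s * amax + c))"
  proof -
    have "s * c \<le> (N - 1) * c" using sN c by (intro mult_right_mono) auto
    hence "s * ((N - 1) * amax + c) \<le> (N - 1) * (s * amax + c)" by (simp add: algebra_simps)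
    thus ?thesis using Rm N by (intro mult_left_mono) auto
  qed
  ultimately have "(N - 1) * (s * RS * (N * amax + c)) \<le> (N - 1) * (Rm * N * (s * amax + c))"
    by (simp add: algebra_simps)
  hence "s * RS * (N * amax + c) \<le> Rm * N * (s * amax + c)" using N by simp
  thus ?thesis using 1 by linarith
qed

theorem theorem4:
  fixes N :: nat and X a b w P_Tx :: real
    and U R P_Rx :: "nat \<Rightarrow> real"
  assumes N2: "N \<ge> 2"
    and X_pos: "X > 0" and a_pos: "a > 0" and b_pos: "b > 0" and w_pos: "w > 0"
    and PTx_pos: "P_Tx > 0"
    and R_pos: "\<forall>i\<in>{1..N}. R i > 0"
    and PRx_pos: "\<forall>i\<in>{1..N}. P_Rx i > 0"
    and cond: "let alpha = (\<lambda>i. a * P_Rx i * X); beta = b * P_Tx * X; gamma = w * X;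
                   Rmin = Min (R ` {1..N}); Rmax = Max (R ` {1..N});
                   amin = Min (alpha ` {1..N}); amax = Max (alpha ` {1..N})
               in Rmax / Rmin \<le> (real N / (real N - 1)) *
                  ((amin * (real N - 1) + beta + gamma) / (amax * real N + beta + gamma))"
  shows "core {1..N} (mc_value U R (\<lambda>i. a * P_Rx i * X) (b * P_Tx * X) (w * X)) \<noteq> {}"
proof -
  define alpha where "alpha = (\<lambda>i. a * P_Rx i * X)"
  define c where "c = b * P_Tx * X + w * X"
  define Rm where "Rm = Min (R ` {1..N})"
  define Rmax where "Rmax = Max (R ` {1..N})"
  define amin where "amin = Min (alpha ` {1..N})"
  define amax where "amax = Max (alpha ` {1..N})"
  have fin: "finite {1..N}" and ne: "{1..N} \<noteq> {}" using N2 by auto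
  have c_pos: "c > 0" unfolding c_def using b_pos PTx_pos X_pos w_pos by (simp add: add_pos_pos)
  have a_i: "alpha i > 0" if "i \<in> {1..N}" for i
    unfolding alpha_def using that PRx_pos a_pos X_pos by simp
  have Rm_in: "Rm \<in> R ` {1..N}" unfolding Rm_def using fin ne by simp
  hence Rm_pos: "Rm > 0" using R_pos by auto
  have Rm_le: "Rm \<le> R i" if "i \<in> {1..N}" for i unfolding Rm_def using fin that by simp
  have Rmax_ge: "R i \<le> Rmax" if "i \<in> {1..N}" for i unfolding Rmax_def using fin that by simp
  have amin_le: "amin \<le> alpha i" if "i \<in> {1..N}" for i unfolding amin_def using fin that by simp
  have amax_ge: "alpha i \<le> amax" if "i \<in> {1..N}" for i unfolding amax_def using fin that by simp
  have amin_in: "amin \<in> alpha ` {1..N}" unfolding amin_def using fin ne by simp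
  hence amin_pos: "amin > 0" using a_i by auto
  have amm: "amin \<le> amax" using amin_in amax_ge by auto
  have Nr: "real N \<ge> 2" using N2 by simp
  have cond': "Rmax / Rm \<le> (real N / (real N - 1)) * ((amin * (real N - 1) + c) / (amax * real N + c))"
    using cond unfolding Let_def alpha_def[symmetric] c_def Rm_def[symmetric] Rmax_def[symmetric]
      amin_def[symmetric] amax_def[symmetric] by (simp add: add.assoc)
  have den: "amax * real N + c > 0" using amm amin_pos c_pos Nr by (simp add: add_pos_pos)
  have cond2: "Rmax * ((real N - 1) * (real N * amax + c)) \<le> Rm * (real N * ((real N - 1) * amin + c))"
  proof -
    have "Rmax / Rm \<le> (real N * (amin * (real N - 1) + c)) / ((real N - 1) * (amax * real N + c))"
      using cond' by (simp add: mult_ac)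
    hence "Rmax * ((real N - 1) * (amax * real N + c)) \<le> (real N * (amin * (real N - 1) + c)) * Rm"
      using Rm_pos den Nr by (intro frac_le_aux2) auto
    thus ?thesis by (simp add: mult_ac)
  qed
  define x where "x = (\<lambda>i. U i - alpha i / Rm - c / (real N * Rm))"
  have rc_all: "rate_coalition R {1..N} = Rm" unfolding rate_coalition_def Rm_def ..
  have "x \<in> core {1..N} (mc_value U R alpha (b * P_Tx * X) (w * X))"
    unfolding core_def
  proof (intro CollectI conjI allI impI)
    show "(\<Sum>i\<in>{1..N}. x i) = mc_value U R alpha (b * P_Tx * X) (w * X) {1..N}"
      unfolding mc_value_def rc_all x_def using Nr
      by (simp add: sum_subtractf sum_divide_distrib c_def)
  next
    fix S assume S: "S \<subseteq> {1..N} \<and> S \<noteq> {}"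
    have finS: "finite S" using S finite_subset fin by blast
    define RS where "RS = Min (R ` S)"
    have RS_in: "RS \<in> R ` S" unfolding RS_def using finS S by simp
    then obtain j where j: "j \<in> S" "RS = R j" by auto
    have RmRS: "Rm \<le> RS" using j S Rm_le by auto
    have RSmax: "RS \<le> Rmax" using j S Rmax_ge by auto
    have RS_pos: "RS > 0" using RmRS Rm_pos by linarith
    define A where "A = (\<Sum>i\<in>S. alpha i)"
    define s where "s = real (card S)"
    have A0: "A \<ge> 0" unfolding A_def using S a_i by (intro sum_nonneg) (auto simp: less_imp_le)
    have As: "A \<le> s * amax" unfolding A_def s_def
    proof -
      have "(\<Sum>i\<in>S. alpha i) \<le> (\<Sum>i\<in>S. amax)"
        using S amax_ge by (intro sum_mono) blast
      thus "(\<Sum>i\<in>S. alpha i) \<le> real (card S) * amax" by simp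
    qed
    have s1: "s \<ge> 1" unfolding s_def using finS S by (simp add: Suc_leI card_gt_0_iff)
    have sN: "s \<le> real N" unfolding s_def using card_mono[OF fin, of S] S by simp
    have main: "RS * (real N * A + s * c) \<le> Rm * (real N * A + real N * c)"
    proof (cases "S = {1..N}")
      case True
      hence "RS = Rm" unfolding RS_def Rm_def by (simp only:)
      have "s * c \<le> real N * c" using sN c_pos by (intro mult_right_mono) simp_all
      hence "Rm * (real N * A + s * c) \<le> Rm * (real N * A + real N * c)"
        using Rm_pos by (intro mult_left_mono) auto
      thus ?thesis using \<open>RS = Rm\<close> by simp
    next
      case False
      hence "S \<subset> {1..N}" using S by blast
      hence "card S < card {1..N}" by (rule psubset_card_mono[OF fin])
      hence "card S < N" by simp
      hence "card S + 1 \<le> N" by linarith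
      hence "real (card S) + 1 \<le> real N" by linarith
      hence "s \<le> real N - 1" unfolding s_def by linarith
      moreover have "0 \<le> amin" using amin_pos by simp
      ultimately show ?thesis by (rule key_ineq[OF Nr s1 _ A0 As Rm_pos RmRS RSmax _ amm c_pos cond2])
    qed
    have lhs: "(\<Sum>i\<in>S. x i) = (\<Sum>i\<in>S. U i) - A / Rm - s * c / (real N * Rm)"
      unfolding x_def A_def s_def by (simp add: sum_subtractf sum_divide_distrib)
    have rhs: "mc_value U R alpha (b * P_Tx * X) (w * X) S = (\<Sum>i\<in>S. U i) - A / RS - c / RS"
      unfolding mc_value_def rate_coalition_def RS_def[symmetric] A_def c_def
      by (simp add: sum_divide_distrib)
    have e1: "A / Rm + s * c / (real N * Rm) = (real N * A + s * c) / (real N * Rm)"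
      using Rm_pos Nr by (simp add: add_divide_distrib)
    have e2: "A / RS + c / RS = (real N * A + real N * c) / (real N * RS)"
      using RS_pos Nr by (simp add: add_divide_distrib)
    have "(real N * A + s * c) / (real N * Rm) \<le> (real N * A + real N * c) / (real N * RS)"
    proof (rule frac_le_aux)
      show "(real N * A + s * c) * (real N * RS) \<le> (real N * A + real N * c) * (real N * Rm)"
        using mult_left_mono[OF main, of "real N"] Nr by (simp add: mult_ac)
    qed (use Rm_pos RS_pos Nr in auto)
    hence "A / Rm + s * c / (real N * Rm) \<le> A / RS + c / RS" using e1 e2 by simp
    thus "mc_value U R alpha (b * P_Tx * X) (w * X) S \<le> (\<Sum>i\<in>S. x i)"
      using lhs rhs by linarith
  qed
  thus ?thesis unfolding alpha_def by blast
qed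

end
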